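(* Consider a discounted MDP with finite state space $\mathcal{S}$, finite action space $\mathcal{A}$, reward vector $r$, transition matrix $P$ with $P_{sa,\tilde s}=\Pr(\tilde s\mid s,a)$, initial state distribution $\mu_0$ with full support, and discount $\gamma\in[0,1)$. Let $\theta\mapsto\pi_\theta$ be a differentiable parametrized policy with $\pi_\theta(s,a)>0$ for all $(s,a)$, and let the critic be directly parametrized by $q\in\mathbb{R}^{|\mathcal{S}||\mathcal{A}|}$. Let $\Psi_\theta=I-\gamma P\Pi_\theta$, $D_\theta=\Delta(d_\theta)$, $\delta_\theta=r-\Psi_\theta q$ and $J_\pi(\theta,q)=(1-\gamma)\mu_0^\top\Pi_\theta q$. Define the semi-gradient quantities: $\partial_q^{\mathrm{semi}}J_q=-D_\theta\delta_\theta$ (a function of $(\theta,q)$); the semi-Hessian $(\partial_q^{\mathrm{semi}})^2J_q=D_\theta$; the semi-derivative $\partial_q^{\mathrm{semi}}J_\pi=d_\theta$; and let $\partial_\theta\partial_q^{\mathrm{semi}}J_q$ be the Jacobian in $\theta$ of $-D_\theta\delta_\theta$ at fixed $q$ (derivative through both $D_\theta$ and $\delta_\theta$). Define $$g^{\mathrm{semi}}_{S,\theta}=\partial_\theta J_\pi-(\partial_\theta\partial_q^{\mathrm{semi}}J_q)^\top\big((\partial_q^{\mathrm{semi}})^2J_q\big)^{-1}(\partial_q^{\mathrm{semi}}J_\pi).$$ Then for every $q$, $g^{\mathrm{semi}}_{S,\theta}=\partial_\theta J_\pi+\nabla_\theta(d_\theta^\top\delta_\theta)=\nabla_\theta J(\theta)$,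 where $J(\theta)=(1-\gamma)\mu_0^\top\Pi_\theta q_\theta$.
   Context: $\pi_\theta\in\mathbb{R}_+^{|\mathcal{S}||\mathcal{A}|}$ has entries $\pi_\theta(s,a)$, normalized in each state. $\Pi_\theta\in\mathbb{R}^{|\mathcal{S}|\times|\mathcal{S}||\mathcal{A}|}$ is block-diagonal with row $s$ containing $\pi_\theta(s,\cdot)^\top$, so $(\Pi_\theta v)(s)=\sum_a\pi_\theta(s,a)v(s,a)$. $q_\theta=\sum_{i\ge0}(\gamma P\Pi_\theta)^i r$. $d_\theta(s,a)=(1-\gamma)\sum_{i\ge0}\gamma^i\Pr(S_i=s,A_i=a)$ is the discounted state-action visitation distribution under $S_0\sim\mu_0$, policy $\pi_\theta$ and transitions $P$; $\Delta(v)$ is the diagonal matrix with diagonal $v$. $\partial_\theta J_\pi$ is the gradient of $J_\pi$ in $\theta$ at fixed $q$. (The semi-gradient quantities arise from the on-policy critic loss $\tfrac12\|r+\gamma P\Pi_\theta q-q\|^2_{d_\theta}$ and the identity $J_\pi=d_\theta^\top(q-q')$, $q'=r+\gamma P\Pi_\theta q$, by not differentiating through the target $q'$.) *)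

theory Defs
  imports "HOL-Analysis.Analysis"
begin

text \<open>The transition matrix P has rows indexed by (s,a) and columns by
  next states: P $ (s,a) $ s' = Pr(s' | s,a). A policy is a vector
  p :: real^('s \<times> 'a) with p $ (s,a) = pi(s,a).\<close>

definition PiMat :: "real^('s::finite \<times> 'a::finite) \<Rightarrow> real^('s \<times> 'a)^'s" where
  "PiMat p = (\<chi> s. \<chi> sa. if fst sa = s then p $ sa else 0)"

definition diagm :: "real^'n::finite \<Rightarrow> real^'n^'n" where
  "diagm v = (\<chi> i j. if i = j then v $ i else 0)"

definition qfun :: "real \<Rightarrow> real^'s::finite^('s \<times> 'a::finite) \<Rightarrow> real^('s \<times> 'a)
    \<Rightarrow> real^('s \<times> 'a) \<Rightarrow> real^('s \<times> 'a)" where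
  "qfun \<gamma> P r p = (\<Sum>i. ((\<lambda>v. (\<gamma> *\<^sub>R (P ** PiMat p)) *v v) ^^ i) r)"

text \<open>Distribution of the state S_i of the Markov chain started at mu0 under policy p.\<close>
fun state_dist :: "real^'s::finite \<Rightarrow> real^'s^('s \<times> 'a::finite) \<Rightarrow> real^('s \<times> 'a)
    \<Rightarrow> nat \<Rightarrow> real^'s" where
  "state_dist \<mu>0 P p 0 = \<mu>0"
| "state_dist \<mu>0 P p (Suc i) =
     (\<chi> s'. \<Sum>sa\<in>UNIV. (state_dist \<mu>0 P p i) $ fst sa * p $ sa * P $ sa $ s')"

definition sa_dist :: "real^'s::finite \<Rightarrow> real^'s^('s \<times> 'a::finite) \<Rightarrow> real^('s \<times> 'a)
    \<Rightarrow> nat \<Rightarrow> real^('s \<times> 'a)" where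
  "sa_dist \<mu>0 P p i = (\<chi> sa. (state_dist \<mu>0 P p i) $ fst sa * p $ sa)"

definition dvis :: "real \<Rightarrow> real^'s::finite \<Rightarrow> real^'s^('s \<times> 'a::finite)
    \<Rightarrow> real^('s \<times> 'a) \<Rightarrow> real^('s \<times> 'a)" where
  "dvis \<gamma> \<mu>0 P p = (1 - \<gamma>) *\<^sub>R (\<Sum>i. (\<gamma> ^ i) *\<^sub>R sa_dist \<mu>0 P p i)"

definition PsiMat :: "real \<Rightarrow> real^'s::finite^('s \<times> 'a::finite) \<Rightarrow> real^('s \<times> 'a)
    \<Rightarrow> real^('s \<times> 'a)^('s \<times> 'a)" where
  "PsiMat \<gamma> P p = mat 1 - \<gamma> *\<^sub>R (P ** PiMat p)"

definition tderr :: "real \<Rightarrow> real^'s::finite^('s \<times> 'a::finite) \<Rightarrow> real^('s \<times> 'a)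
    \<Rightarrow> real^('s \<times> 'a) \<Rightarrow> real^('s \<times> 'a) \<Rightarrow> real^('s \<times> 'a)" where
  "tderr \<gamma> P r p q = r - PsiMat \<gamma> P p *v q"

definition Jpi :: "real \<Rightarrow> real^'s::finite \<Rightarrow> real^('s \<times> 'a::finite)
    \<Rightarrow> real^('s \<times> 'a) \<Rightarrow> real" where
  "Jpi \<gamma> \<mu>0 p q = (1 - \<gamma>) * (\<mu>0 \<bullet> (PiMat p *v q))"

definition pderiv_k :: "(real^'k::finite \<Rightarrow> real) \<Rightarrow> real^'k \<Rightarrow> 'k \<Rightarrow> real" where
  "pderiv_k f \<theta> k = deriv (\<lambda>t. f (\<theta> + t *\<^sub>R axis k 1)) 0"

definition grad :: "(real^'k::finite \<Rightarrow> real) \<Rightarrow> real^'k \<Rightarrow> real^'k" where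
  "grad f \<theta> = (\<chi> k. pderiv_k f \<theta> k)"

definition jacobian :: "(real^'k::finite \<Rightarrow> real^'n::finite) \<Rightarrow> real^'k \<Rightarrow> real^'k^'n" where
  "jacobian F \<theta> = (\<chi> i. \<chi> k. pderiv_k (\<lambda>x. F x $ i) \<theta> k)"

definition g_semi :: "real \<Rightarrow> real^'s::finite \<Rightarrow> real^'s^('s \<times> 'a::finite) \<Rightarrow> real^('s \<times> 'a)
    \<Rightarrow> (real^'k::finite \<Rightarrow> real^('s \<times> 'a)) \<Rightarrow> real^'k \<Rightarrow> real^('s \<times> 'a) \<Rightarrow> real^'k" where
  "g_semi \<gamma> \<mu>0 P r pol \<theta> q =
     (let dJpi_dtheta = grad (\<lambda>x. Jpi \<gamma> \<mu>0 (pol x) q) \<theta>;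
          dq_Jq = (\<lambda>x. - (diagm (dvis \<gamma> \<mu>0 P (pol x)) *v tderr \<gamma> P r (pol x) q));
          dtheta_dq_Jq = jacobian dq_Jq \<theta>;
          hess_q_Jq = diagm (dvis \<gamma> \<mu>0 P (pol \<theta>));
          dq_Jpi = dvis \<gamma> \<mu>0 P (pol \<theta>)
      in dJpi_dtheta - transpose dtheta_dq_Jq *v (matrix_inv hess_q_Jq *v dq_Jpi))"

end

theory Submission
  imports Defs
begin

lemma prod_differentiable:
  fixes f :: "'i \<Rightarrow> real \<Rightarrow> real"
  assumes "finite S" "\<forall>i\<in>S. f i differentiable (at x)"
  shows "(\<lambda>t. \<Prod>i\<in>S. f i t) differentiable (at x)"
  using assms by (induction S rule: finite_induct) auto

lemma det_differentiable:
  fixes A :: "real \<Rightarrow> real^'n::finite^'n"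
  assumes "\<forall>i j. (\<lambda>t. A t $ i $ j) differentiable (at x)"
  shows "(\<lambda>t. det (A t)) differentiable (at x)"
  unfolding det_def
  apply (rule differentiable_sum)
   apply simp
  apply (intro ballI differentiable_mult differentiable_const prod_differentiable)
  using assms by auto

lemma cramer_differentiable:
  fixes A :: "real \<Rightarrow> real^'n::finite^'n" and b y :: "real \<Rightarrow> real^'n"
  assumes "\<forall>i j. (\<lambda>t. A t $ i $ j) differentiable (at x)"
    and "\<forall>i. (\<lambda>t. b t $ i) differentiable (at x)"
    and "\<forall>t. det (A t) \<noteq> 0" and "\<forall>t. A t *v y t = b t"
  shows "(\<lambda>t. y t $ k) differentiable (at x)"
proof -
  have "y t $ k = det(\<chi> i j. if j=k then b t$i else A t$i$j) / det (A t)" for t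
    using cramer[OF assms(3)[rule_format, of t], of "y t" "b t"] assms(4) by simp
  moreover have "(\<lambda>t. det(\<chi> i j. if j=k then b t$i else A t$i$j) / det (A t)) differentiable (at x)"
  proof (intro differentiable_divide det_differentiable allI)
    fix i j
    show "(\<lambda>t. (\<chi> i j. if j = k then b t $ i else A t $ i $ j) $ i $ j) differentiable (at x)"
      by (cases "j = k") (use assms in auto)
  qed (use assms in auto)
  ultimately show ?thesis by simp
qed

lemma line_differentiable:
  fixes pol :: "real^'k::finite \<Rightarrow> real^'n::finite"
  assumes "\<forall>x. pol differentiable (at x)"
  shows "(\<lambda>t. pol (\<theta> + t *\<^sub>R axis k 1) $ i) differentiable (at x)"
proof -
  have "(\<lambda>t. \<theta> + t *\<^sub>R axis k (1::real)) differentiable (at x)"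
    by (intro derivative_intros)
  then have "((\<lambda>v. v $ i) \<circ> (pol \<circ> (\<lambda>t. \<theta> + t *\<^sub>R axis k 1))) differentiable (at x)"
  proof -
    assume h: "(\<lambda>t. \<theta> + t *\<^sub>R axis k (1::real)) differentiable (at x)"
    have "(pol \<circ> (\<lambda>t. \<theta> + t *\<^sub>R axis k 1)) differentiable (at x)"
      using differentiable_chain_at[OF h assms[rule_format]] .
    then show ?thesis
      using differentiable_chain_at bounded_linear_imp_differentiable[OF bounded_linear_vec_nth] by blast
  qed
  then show ?thesis by (simp add: o_def)
qed



lemma sum_pair: "(\<Sum>sa\<in>(UNIV::('s::finite \<times> 'a::finite) set). g sa) = (\<Sum>s\<in>UNIV. \<Sum>a\<in>UNIV. g (s,a))"
proof -
  have "(\<Sum>s\<in>UNIV. \<Sum>a\<in>UNIV. g (s,a)) = (\<Sum>(s,a)\<in>(UNIV::'s set)\<times>(UNIV::'a set). g (s,a))"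
    by (rule sum.cartesian_product)
  then show ?thesis by simp
qed

lemma PM_entry: "(P ** PiMat p) $ i $ j = P $ i $ fst j * p $ j"
proof -
  have "(P ** PiMat p) $ i $ j = (\<Sum>k\<in>UNIV. P $ i $ k * (if fst j = k then p $ j else 0))"
    by (simp add: matrix_matrix_mult_def PiMat_def)
  also have "\<dots> = (\<Sum>k\<in>UNIV. if k = fst j then P $ i $ k * p $ j else 0)"
    by (rule sum.cong) auto
  also have "\<dots> = P $ i $ fst j * p $ j" by (subst sum.delta) auto
  finally show ?thesis .
qed

lemma PM_rowsum:
  assumes "\<forall>sa. (\<Sum>s'\<in>UNIV. P $ sa $ s') = 1" "\<forall>s. (\<Sum>a\<in>UNIV. p $ (s, a)) = 1"
  shows "(\<Sum>j\<in>UNIV. (P ** PiMat p) $ i $ j) = (1::real)"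
proof -
  have "(\<Sum>j\<in>UNIV. (P ** PiMat p) $ i $ j) = (\<Sum>s\<in>UNIV. \<Sum>a\<in>UNIV. P $ i $ s * p $ (s,a))"
    unfolding PM_entry sum_pair by simp
  also have "\<dots> = (\<Sum>s\<in>UNIV. P $ i $ s * (\<Sum>a\<in>UNIV. p $ (s,a)))"
    by (simp add: sum_distrib_left)
  also have "\<dots> = 1" using assms by simp
  finally show ?thesis .
qed

lemma contr:
  fixes M :: "real^'n::finite^'m::finite"
  assumes "\<forall>i j. 0 \<le> M $ i $ j" "\<forall>i. (\<Sum>j\<in>UNIV. M $ i $ j) = 1" "\<forall>j. \<bar>v $ j\<bar> \<le> c"
  shows "\<bar>(M *v v) $ i\<bar> \<le> c"
proof -
  have "\<bar>(M *v v) $ i\<bar> \<le> (\<Sum>j\<in>UNIV. \<bar>M $ i $ j * v $ j\<bar>)"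
    unfolding matrix_vector_mult_def by (simp add: sum_abs)
  also have "\<dots> \<le> (\<Sum>j\<in>UNIV. M $ i $ j * c)"
    by (intro sum_mono) (use assms in \<open>auto simp: abs_mult intro: mult_left_mono\<close>)
  also have "\<dots> = c" using assms by (simp flip: sum_distrib_right)
  finally show ?thesis .
qed

lemma mat_apply: "((mat 1 - \<gamma> *\<^sub>R N) *v x) $ i = x $ i - \<gamma> * (N *v x) $ i"
  for N :: "real^'n::finite^'n"
  by (simp only: matrix_vector_mult_diff_rdistrib matrix_vector_mul_lid scaleR_matrix_vector_assoc[symmetric] vector_minus_component vector_scaleR_component real_scaleR_def)

lemma transpose_minus: "transpose (A - B) = transpose A - transpose (B::real^'n::finite^'m::finite)"
  by (simp add: transpose_def vec_eq_iff)

lemma Psi_apply: "(PsiMat \<gamma> P p *v x) $ i = x $ i - \<gamma> * ((P ** PiMat p) *v x) $ i"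
  unfolding PsiMat_def by (rule mat_apply)

lemma PsiT_apply: "(transpose (PsiMat \<gamma> P p) *v x) $ i = x $ i - \<gamma> * (transpose (P ** PiMat p) *v x) $ i"
proof -
  have "transpose (PsiMat \<gamma> P p) = mat 1 - \<gamma> *\<^sub>R transpose (P ** PiMat p)"
    unfolding PsiMat_def transpose_minus transpose_scalar transpose_mat ..
  show ?thesis unfolding \<open>transpose (PsiMat \<gamma> P p) = _\<close> by (rule mat_apply)
qed

lemma Psi_det:
  fixes P :: "real^'s::finite^('s \<times> 'a::finite)"
  assumes "0 \<le> \<gamma>" "\<gamma> < 1" "\<forall>sa s'. 0 \<le> P $ sa $ s'"
    "\<forall>sa. (\<Sum>s'\<in>UNIV. P $ sa $ s') = 1" "\<forall>sa. 0 \<le> p $ sa" "\<forall>s. (\<Sum>a\<in>UNIV. p $ (s, a)) = 1"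
  shows "det (PsiMat \<gamma> P p) \<noteq> 0"
proof -
  let ?M = "P ** PiMat p"
  have Mn: "\<forall>i j. 0 \<le> ?M $ i $ j" using assms by (simp add: PM_entry)
  have Ms: "\<forall>i. (\<Sum>j\<in>UNIV. ?M $ i $ j) = 1" using PM_rowsum[OF assms(4,6)] by blast
  have ker: "x = 0" if "PsiMat \<gamma> P p *v x = 0" for x
  proof -
    define c where "c = Max (range (\<lambda>j. \<bar>x $ j\<bar>))"
    have cb: "\<forall>j. \<bar>x $ j\<bar> \<le> c" unfolding c_def by simp
    have "c \<in> range (\<lambda>j. \<bar>x $ j\<bar>)" unfolding c_def by (rule Max_in) auto
    then obtain j0 where j0: "c = \<bar>x $ j0\<bar>" by blast
    have xi: "x $ i = \<gamma> * (?M *v x) $ i" for i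
      using arg_cong[OF that, of "\<lambda>v. v $ i"] by (simp add: Psi_apply)
    have "\<bar>(?M *v x) $ j0\<bar> \<le> c" by (rule contr[OF Mn Ms cb])
    have "\<bar>x $ j0\<bar> = \<bar>\<gamma> * (?M *v x) $ j0\<bar>" using xi[of j0] by (rule arg_cong)
    also have "\<dots> = \<gamma> * \<bar>(?M *v x) $ j0\<bar>" using assms(1) by (simp add: abs_mult)
    also have "\<dots> \<le> \<gamma> * c" using assms(1) \<open>\<bar>(?M *v x) $ j0\<bar> \<le> c\<close> by (rule mult_left_mono[rotated])
    finally have "\<bar>x $ j0\<bar> \<le> \<gamma> * c" .
    then have "(1 - \<gamma>) * c \<le> 0" using j0 by (simp add: algebra_simps)
    then have "c \<le> 0" using assms(2) by (simp add: mult_le_0_iff)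
    show ?thesis
      unfolding vec_eq_iff
    proof
      fix i
      have "\<bar>x $ i\<bar> \<le> 0" using cb \<open>c \<le> 0\<close> by (meson order_trans)
      then show "x $ i = 0 $ i" by simp
    qed
  qed
  then have "\<exists>B. B ** PsiMat \<gamma> P p = mat 1"
    using matrix_left_invertible_ker[of "PsiMat \<gamma> P p"] by blast
  then obtain B where B: "B ** PsiMat \<gamma> P p = mat 1" by blast
  then have "PsiMat \<gamma> P p ** B = mat 1" using matrix_left_right_inverse by blast
  then have "invertible (PsiMat \<gamma> P p)"
    unfolding invertible_def using B by blast
  then show ?thesis by (simp add: invertible_det_nz)
qed



lemma PsiT_eq: "transpose (PsiMat \<gamma> P p) = mat 1 - \<gamma> *\<^sub>R transpose (P ** PiMat p)"
  unfolding PsiMat_def transpose_minus transpose_scalar transpose_mat ..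

lemma transpose_mv: "(transpose M *v v) $ j = (\<Sum>i\<in>UNIV. M $ i $ j * v $ i)"
  for M :: "real^'n::finite^'m::finite"
  by (simp add: transpose_def matrix_vector_mult_def)

locale mdp =
  fixes \<gamma> :: real and \<mu>0 :: "real^'s::finite" and P :: "real^'s^('s \<times> 'a::finite)"
    and p :: "real^('s \<times> 'a)"
  assumes g0: "0 \<le> \<gamma>" and g1: "\<gamma> < 1"
    and Pn: "\<forall>sa s'. 0 \<le> P $ sa $ s'"
    and Ps: "\<forall>sa. (\<Sum>s'\<in>UNIV. P $ sa $ s') = 1"
    and mpos: "\<forall>s. 0 < \<mu>0 $ s"
    and msum: "(\<Sum>s\<in>UNIV. \<mu>0 $ s) = 1"
    and ppos: "\<forall>sa. 0 < p $ sa"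
    and pnorm: "\<forall>s. (\<Sum>a\<in>UNIV. p $ (s, a)) = 1"
begin

abbreviation "M \<equiv> P ** PiMat p"

lemma Mn: "0 \<le> M $ i $ j"
  unfolding PM_entry using Pn[rule_format, of i "fst j"] ppos[rule_format, of j] by simp

lemma Ms: "(\<Sum>j\<in>UNIV. M $ i $ j) = 1"
  using PM_rowsum[OF Ps pnorm] by blast

lemma det_Psi: "det (PsiMat \<gamma> P p) \<noteq> 0"
  using Psi_det[OF g0 g1 Pn Ps _ pnorm] ppos by (simp add: less_imp_le)

lemma p_le1: "p $ j \<le> 1"
proof -
  obtain s a where j: "j = (s,a)" by (cases j)
  have "p $ (s,a) \<le> (\<Sum>a'\<in>UNIV. p $ (s, a'))"
    by (rule member_le_sum) (use ppos in \<open>auto simp: less_imp_le\<close>)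
  then show ?thesis using pnorm j by simp
qed

lemma qfun_eq: "PsiMat \<gamma> P p *v qfun \<gamma> P r p = r"
proof -
  define T where "T = (\<lambda>v. (\<gamma> *\<^sub>R M) *v v)"
  define f where "f n = (T ^^ n) r" for n
  define R where "R = (\<Sum>j\<in>UNIV. \<bar>r $ j\<bar>)"
  have Tc: "T v $ j = \<gamma> * (M *v v) $ j" for v j
    unfolding T_def by (simp only: scaleR_matrix_vector_assoc[symmetric] vector_scaleR_component real_scaleR_def)
  have fb: "\<bar>f n $ j\<bar> \<le> \<gamma> ^ n * R" for n j
  proof (induction n arbitrary: j)
    case 0
    have "\<bar>r $ j\<bar> \<le> (\<Sum>j\<in>UNIV. \<bar>r $ j\<bar>)" by (rule member_le_sum) auto
    then show ?case unfolding f_def R_def by simp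
  next
    case (Suc n)
    have "\<bar>(M *v f n) $ j\<bar> \<le> \<gamma> ^ n * R"
      by (rule contr) (use Mn Ms Suc in auto)
    then have "\<gamma> * \<bar>(M *v f n) $ j\<bar> \<le> \<gamma> * (\<gamma> ^ n * R)"
      using g0 by (rule mult_left_mono)
    moreover have "f (Suc n) = T (f n)" unfolding f_def by simp
    ultimately show ?case using g0 by (simp add: Tc abs_mult)
  qed
  have "summable f"
  proof (rule summable_comparison_test')
    show "summable (\<lambda>n. real CARD('s \<times> 'a) * R * \<gamma> ^ n)"
      using g0 g1 by (intro summable_mult summable_geometric) simp
    fix n
    have "norm (f n) \<le> (\<Sum>j\<in>UNIV. \<bar>f n $ j\<bar>)" by (rule norm_le_l1_cart)
    also have "\<dots> \<le> (\<Sum>j\<in>(UNIV::('s\<times>'a) set). \<gamma> ^ n * R)" by (rule sum_mono) (rule fb)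
    also have "\<dots> = real CARD('s \<times> 'a) * R * \<gamma> ^ n" by simp
    finally show "norm (f n) \<le> real CARD('s \<times> 'a) * R * \<gamma> ^ n" .
  qed
  have q: "qfun \<gamma> P r p = suminf f" unfolding qfun_def f_def T_def ..
  have bl: "bounded_linear T" unfolding T_def by simp
  have "T (suminf f) = (\<Sum>n. T (f n))" by (rule bounded_linear.suminf[OF bl \<open>summable f\<close>])
  also have "\<dots> = (\<Sum>n. f (Suc n))" unfolding f_def by simp
  also have "\<dots> = suminf f - r" using suminf_split_head[OF \<open>summable f\<close>] by (simp add: f_def)
  finally have "T (suminf f) = suminf f - r" .
  then show ?thesis unfolding q PsiMat_def T_def
    by (simp only: matrix_vector_mult_diff_rdistrib matrix_vector_mul_lid) simp
qed

abbreviation "sd n \<equiv> state_dist \<mu>0 P p n"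
abbreviation "sa n \<equiv> sa_dist \<mu>0 P p n"

lemma sd_props: "(\<forall>s. 0 \<le> sd n $ s) \<and> (\<Sum>s\<in>UNIV. sd n $ s) = 1"
proof (induction n)
  case 0
  show ?case using mpos msum by (simp add: less_imp_le)
next
  case (Suc n)
  define a where "a sa = sd n $ fst sa * p $ sa" for sa
  have e: "sd (Suc n) $ s' = (\<Sum>sa\<in>UNIV. a sa * P $ sa $ s')" for s'
    by (simp add: a_def)
  have an: "0 \<le> a sa" for sa
    unfolding a_def using Suc ppos[rule_format, of sa] by (simp add: less_imp_le)
  have "0 \<le> sd (Suc n) $ s" for s
    unfolding e by (intro sum_nonneg mult_nonneg_nonneg an) (use Pn in auto)
  moreover have "(\<Sum>s'\<in>UNIV. sd (Suc n) $ s') = 1"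
  proof -
    have "(\<Sum>s'\<in>UNIV. sd (Suc n) $ s') = (\<Sum>sa\<in>UNIV. \<Sum>s'\<in>UNIV. a sa * P $ sa $ s')"
      unfolding e by (rule sum.swap)
    also have "\<dots> = (\<Sum>sa\<in>UNIV. a sa * (\<Sum>s'\<in>UNIV. P $ sa $ s'))"
      by (simp add: sum_distrib_left)
    also have "\<dots> = (\<Sum>sa\<in>UNIV. a sa)" by (intro sum.cong refl) (simp add: Ps[rule_format])
    also have "\<dots> = (\<Sum>s\<in>UNIV. \<Sum>b\<in>UNIV. sd n $ s * p $ (s, b))"
      unfolding a_def sum_pair by simp
    also have "\<dots> = (\<Sum>s\<in>UNIV. sd n $ s * (\<Sum>b\<in>UNIV. p $ (s, b)))"
      by (simp add: sum_distrib_left)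
    also have "\<dots> = 1" using pnorm Suc by simp
    finally show ?thesis .
  qed
  ultimately show ?case by blast
qed

lemma sd_le1: "sd n $ s \<le> 1"
proof -
  have "sd n $ s \<le> (\<Sum>s'\<in>UNIV. sd n $ s')"
    by (rule member_le_sum) (use sd_props in auto)
  then show ?thesis using sd_props by simp
qed

lemma sa_nonneg: "0 \<le> sa n $ j"
  unfolding sa_dist_def using sd_props[of n] ppos[rule_format, of j] by (simp add: less_imp_le)

lemma sa_le1: "\<bar>sa n $ j\<bar> \<le> 1"
proof -
  have "sa n $ j \<le> 1"
    unfolding sa_dist_def using sd_props[of n] ppos[rule_format, of j] sd_le1[of n "fst j"] p_le1[of j]
    by (simp add: mult_le_one less_imp_le)
  then show ?thesis using sa_nonneg[of n j] by simp
qed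

lemma sa_step: "sa (Suc n) = transpose M *v sa n"
proof -
  have "sa (Suc n) $ j = (transpose M *v sa n) $ j" for j
  proof -
    have "sa (Suc n) $ j = (\<Sum>i\<in>UNIV. sd n $ fst i * p $ i * P $ i $ fst j) * p $ j"
      by (simp add: sa_dist_def)
    also have "\<dots> = (\<Sum>i\<in>UNIV. M $ i $ j * sa n $ i)"
      unfolding sum_distrib_right PM_entry sa_dist_def by (rule sum.cong) simp_all
    finally show ?thesis unfolding transpose_mv .
  qed
  then show ?thesis by (simp add: vec_eq_iff)
qed

lemma sa_summable: "summable (\<lambda>n. \<gamma> ^ n *\<^sub>R sa n)"
proof (rule summable_comparison_test')
  show "summable (\<lambda>n. real CARD('s \<times> 'a) * \<gamma> ^ n)"
    using g0 g1 by (intro summable_mult summable_geometric) simp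
  fix n
  have "norm (sa n) \<le> (\<Sum>j\<in>UNIV. \<bar>sa n $ j\<bar>)" by (rule norm_le_l1_cart)
  also have "\<dots> \<le> (\<Sum>j\<in>(UNIV::('s\<times>'a) set). 1)" by (rule sum_mono) (rule sa_le1)
  finally have "norm (sa n) \<le> real CARD('s \<times> 'a)" by simp
  then have "\<gamma> ^ n * norm (sa n) \<le> \<gamma> ^ n * real CARD('s \<times> 'a)"
    using g0 by (intro mult_left_mono) simp_all
  then show "norm (\<gamma> ^ n *\<^sub>R sa n) \<le> real CARD('s \<times> 'a) * \<gamma> ^ n"
    using g0 by (simp add: mult.commute)
qed

lemma dvis_eq: "transpose (PsiMat \<gamma> P p) *v dvis \<gamma> \<mu>0 P p = (1 - \<gamma>) *\<^sub>R sa 0"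
proof -
  define f where "f n = \<gamma> ^ n *\<^sub>R sa n" for n
  define T where "T = (\<lambda>v. (\<gamma> *\<^sub>R transpose M) *v v)"
  have bl: "bounded_linear T" unfolding T_def by simp
  have sf: "summable f" unfolding f_def by (rule sa_summable)
  have Tf: "T (f n) = f (Suc n)" for n
    unfolding T_def f_def sa_step
    by (simp only: scaleR_matrix_vector_assoc[symmetric] matrix_vector_mult_scaleR scaleR_scaleR power_Suc mult.commute)
  have "T (suminf f) = (\<Sum>n. T (f n))" by (rule bounded_linear.suminf[OF bl sf])
  also have "\<dots> = (\<Sum>n. f (Suc n))" unfolding Tf ..
  also have "\<dots> = suminf f - sa 0" using suminf_split_head[OF sf] by (simp add: f_def)
  finally have e: "T (suminf f) = suminf f - sa 0" .
  have "transpose (PsiMat \<gamma> P p) *v suminf f = sa 0"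
    unfolding PsiT_eq matrix_vector_mult_diff_rdistrib matrix_vector_mul_lid
    using e unfolding T_def by simp
  moreover have "dvis \<gamma> \<mu>0 P p = (1 - \<gamma>) *\<^sub>R suminf f" unfolding dvis_def f_def ..
  ultimately show ?thesis by (simp add: matrix_vector_mult_scaleR)
qed

lemma dvis_pos: "0 < dvis \<gamma> \<mu>0 P p $ j"
proof -
  define f where "f n = \<gamma> ^ n *\<^sub>R sa n" for n
  have sf: "summable f" unfolding f_def by (rule sa_summable)
  have c: "suminf f $ j = (\<Sum>n. f n $ j)"
    by (rule bounded_linear.suminf[OF bounded_linear_vec_nth sf])
  have sfj: "summable (\<lambda>n. f n $ j)"
  proof (rule summable_comparison_test')
    show "summable (\<lambda>n. \<gamma> ^ n)" using g0 g1 by (intro summable_geometric) simp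
    fix n
    have "\<bar>sa n $ j\<bar> \<le> 1" by (rule sa_le1)
    then have "\<gamma> ^ n * \<bar>sa n $ j\<bar> \<le> \<gamma> ^ n * 1" using g0 by (intro mult_left_mono) simp_all
    then show "norm (f n $ j) \<le> \<gamma> ^ n" unfolding f_def using g0 by (simp add: abs_mult)
  qed
  have "sum (\<lambda>n. f n $ j) {0} \<le> (\<Sum>n. f n $ j)"
    by (rule sum_le_suminf[OF sfj]) (auto simp: f_def sa_nonneg g0)
  moreover have "0 < f 0 $ j" unfolding f_def sa_dist_def
    using mpos[rule_format, of "fst j"] ppos[rule_format, of j] by simp
  ultimately have "0 < suminf f $ j" using c by simp
  moreover have "dvis \<gamma> \<mu>0 P p $ j = (1 - \<gamma>) * suminf f $ j" unfolding dvis_def f_def by simp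
  ultimately show ?thesis using g1 by simp
qed

lemma Jpi_eq: "Jpi \<gamma> \<mu>0 p q = (1 - \<gamma>) * (sa 0 \<bullet> q)"
proof -
  have "\<mu>0 \<bullet> (PiMat p *v q) = (\<Sum>s\<in>UNIV. \<mu>0 $ s * (\<Sum>j\<in>UNIV. (if fst j = s then p $ j else 0) * q $ j))"
    by (simp add: inner_vec_def matrix_vector_mult_def PiMat_def)
  also have "\<dots> = (\<Sum>s\<in>UNIV. \<Sum>j\<in>UNIV. if s = fst j then \<mu>0 $ s * p $ j * q $ j else 0)"
    unfolding sum_distrib_left by (intro sum.cong refl) auto
  also have "\<dots> = (\<Sum>j\<in>UNIV. \<Sum>s\<in>UNIV. if s = fst j then \<mu>0 $ s * p $ j * q $ j else 0)"
    by (rule sum.swap)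
  also have "\<dots> = (\<Sum>j\<in>UNIV. \<mu>0 $ fst j * p $ j * q $ j)"
    by (intro sum.cong refl) (subst sum.delta, auto)
  also have "\<dots> = sa 0 \<bullet> q" by (simp add: inner_vec_def sa_dist_def)
  finally show ?thesis unfolding Jpi_def by simp
qed

lemma J_identity:
  "Jpi \<gamma> \<mu>0 p (qfun \<gamma> P r p) = Jpi \<gamma> \<mu>0 p q + dvis \<gamma> \<mu>0 P p \<bullet> tderr \<gamma> P r p q"
proof -
  let ?d = "dvis \<gamma> \<mu>0 P p" and ?Q = "qfun \<gamma> P r p" and ?S = "PsiMat \<gamma> P p"
  have "tderr \<gamma> P r p q = ?S *v (?Q - q)"
    unfolding tderr_def matrix_vector_mult_diff_distrib by (subst qfun_eq[of r]) (rule refl)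
  then have "?d \<bullet> tderr \<gamma> P r p q = (transpose ?S *v ?d) \<bullet> (?Q - q)"
    by (simp add: dot_lmul_matrix)
  also have "\<dots> = (1 - \<gamma>) * (sa 0 \<bullet> ?Q) - (1 - \<gamma>) * (sa 0 \<bullet> q)"
    unfolding dvis_eq by (simp add: inner_diff_right algebra_simps)
  finally show ?thesis unfolding Jpi_eq by simp
qed

end


lemma Psi_entry: "PsiMat \<gamma> P p $ i $ j = (if i = j then 1 else 0) - \<gamma> * (P $ i $ fst j * p $ j)"
  by (simp add: PsiMat_def mat_def PM_entry)

lemma diagm_mv: "(diagm v *v w) $ i = v $ i * (w $ i :: real)"
proof -
  have "(diagm v *v w) $ i = (\<Sum>j\<in>UNIV. if j = i then v $ i * w $ j else 0)"
    unfolding matrix_vector_mult_def diagm_def vec_lambda_beta by (rule sum.cong) auto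
  also have "\<dots> = v $ i * w $ i" by (subst sum.delta) auto
  finally show ?thesis .
qed

lemma diagm_mm: "diagm a ** diagm b = diagm (\<chi> i. a $ i * b $ i :: real^'n::finite)"
proof -
  have "(diagm a ** diagm b) $ i $ j = diagm (\<chi> i. a $ i * b $ i) $ i $ j" for i j
  proof -
    have "(diagm a ** diagm b) $ i $ j = (\<Sum>k\<in>UNIV. if k = i then (if i = j then a $ i * b $ i else 0) else 0)"
      unfolding matrix_matrix_mult_def diagm_def vec_lambda_beta by (rule sum.cong) auto
    also have "\<dots> = diagm (\<chi> i. a $ i * b $ i) $ i $ j" by (subst sum.delta) (auto simp: diagm_def)
    finally show ?thesis .
  qed
  then show ?thesis by (simp add: vec_eq_iff)
qed

lemma diagm_inv_ones:
  assumes "\<forall>i. d $ i \<noteq> (0::real)"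
  shows "matrix_inv (diagm d) *v d = 1"
proof -
  let ?B = "diagm (\<chi> i. inverse (d $ i))"
  have e1: "diagm d ** ?B = mat 1" unfolding diagm_mm
    using assms by (simp add: diagm_def mat_def vec_eq_iff)
  have e2: "?B ** diagm d = mat 1" unfolding diagm_mm
    using assms by (simp add: diagm_def mat_def vec_eq_iff)
  have "\<exists>A'. diagm d ** A' = mat 1 \<and> A' ** diagm d = mat 1" using e1 e2 by blast
  then have "diagm d ** matrix_inv (diagm d) = mat 1 \<and> matrix_inv (diagm d) ** diagm d = mat 1"
    unfolding matrix_inv_def by (rule someI_ex)
  then have L: "matrix_inv (diagm d) ** diagm d = mat 1" by blast
  have "diagm d *v 1 = d" by (simp add: vec_eq_iff diagm_mv)
  then have "matrix_inv (diagm d) *v d = (matrix_inv (diagm d) ** diagm d) *v 1"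
    by (metis matrix_vector_mul_assoc)
  then show ?thesis using L by simp
qed

lemma deriv_sum':
  fixes f :: "'i \<Rightarrow> real \<Rightarrow> real"
  assumes "finite S" "\<forall>i\<in>S. f i differentiable (at x)"
  shows "deriv (\<lambda>t. \<Sum>i\<in>S. f i t) x = (\<Sum>i\<in>S. deriv (f i) x)"
proof -
  have "\<And>i. i \<in> S \<Longrightarrow> (f i has_real_derivative deriv (f i) x) (at x)"
    using assms DERIV_deriv_iff_real_differentiable by blast
  then have "((\<lambda>t. \<Sum>i\<in>S. f i t) has_real_derivative (\<Sum>i\<in>S. deriv (f i) x)) (at x)"
    by (rule DERIV_sum)
  then show ?thesis by (rule DERIV_imp_deriv)
qed

lemma deriv_add':
  fixes f g :: "real \<Rightarrow> real"
  assumes "f differentiable (at x)" "g differentiable (at x)"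
  shows "deriv (\<lambda>t. f t + g t) x = deriv f x + deriv g x"
proof -
  have "(f has_real_derivative deriv f x) (at x)" "(g has_real_derivative deriv g x) (at x)"
    using assms DERIV_deriv_iff_real_differentiable by blast+
  then have "((\<lambda>t. f t + g t) has_real_derivative deriv f x + deriv g x) (at x)"
    by (rule DERIV_add)
  then show ?thesis by (rule DERIV_imp_deriv)
qed

lemma deriv_minus':
  fixes f :: "real \<Rightarrow> real"
  assumes "f differentiable (at x)"
  shows "deriv (\<lambda>t. - f t) x = - deriv f x"
proof -
  have "(f has_real_derivative deriv f x) (at x)"
    using assms DERIV_deriv_iff_real_differentiable by blast
  then have "((\<lambda>t. - f t) has_real_derivative - deriv f x) (at x)"
    by (rule DERIV_minus)
  then show ?thesis by (rule DERIV_imp_deriv)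
qed


theorem mainTheorem4:
  fixes \<gamma> :: real
    and \<mu>0 :: "real^'s::finite"
    and P :: "real^'s^('s \<times> 'a::finite)"
    and r :: "real^('s \<times> 'a)"
    and pol :: "real^'k::finite \<Rightarrow> real^('s \<times> 'a)"
    and \<theta> :: "real^'k"
    and q :: "real^('s \<times> 'a)"
  assumes gamma: "0 \<le> \<gamma>" "\<gamma> < 1"
    and P_nonneg: "\<forall>sa s'. 0 \<le> P $ sa $ s'"
    and P_stoch: "\<forall>sa. (\<Sum>s'\<in>UNIV. P $ sa $ s') = 1"
    and mu0_pos: "\<forall>s. 0 < \<mu>0 $ s"
    and mu0_sum: "(\<Sum>s\<in>UNIV. \<mu>0 $ s) = 1"
    and pol_pos: "\<forall>x sa. 0 < pol x $ sa"
    and pol_norm: "\<forall>x s. (\<Sum>a\<in>UNIV. pol x $ (s, a)) = 1"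
    and pol_diff: "\<forall>x. pol differentiable (at x)"
  shows "g_semi \<gamma> \<mu>0 P r pol \<theta> q
           = grad (\<lambda>x. Jpi \<gamma> \<mu>0 (pol x) q) \<theta>
             + grad (\<lambda>x. dvis \<gamma> \<mu>0 P (pol x) \<bullet> tderr \<gamma> P r (pol x) q) \<theta>
       \<and> g_semi \<gamma> \<mu>0 P r pol \<theta> q
           = grad (\<lambda>x. Jpi \<gamma> \<mu>0 (pol x) (qfun \<gamma> P r (pol x))) \<theta>"
proof -
  have loc: "mdp \<gamma> \<mu>0 P (pol x)" for x
    by unfold_locales (use gamma P_nonneg P_stoch mu0_pos mu0_sum pol_pos pol_norm in auto)
  define l where "l k t = \<theta> + t *\<^sub>R axis k (1::real)" for k t
  define d where "d x = dvis \<gamma> \<mu>0 P (pol x)" for x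
  define e where "e x = tderr \<gamma> P r (pol x) q" for x
  have dpol: "(\<lambda>t. pol (l k t) $ j) differentiable (at 0)" for k j
    unfolding l_def by (rule line_differentiable[OF pol_diff])
  have dd: "(\<lambda>t. d (l k t) $ i) differentiable (at 0)" for k i
    unfolding d_def
  proof (rule cramer_differentiable[where A="\<lambda>t. transpose (PsiMat \<gamma> P (pol (l k t)))"
        and b="\<lambda>t. (1-\<gamma>) *\<^sub>R sa_dist \<mu>0 P (pol (l k t)) 0"])
    show "\<forall>i j. (\<lambda>t. transpose (PsiMat \<gamma> P (pol (l k t))) $ i $ j) differentiable (at 0)"
    proof (intro allI)
      fix i j
      show "(\<lambda>t. transpose (PsiMat \<gamma> P (pol (l k t))) $ i $ j) differentiable (at 0)"
        unfolding transpose_def vec_lambda_beta Psi_entry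
        by (intro differentiable_diff differentiable_const differentiable_mult dpol)
    qed
    show "\<forall>i. (\<lambda>t. ((1-\<gamma>) *\<^sub>R sa_dist \<mu>0 P (pol (l k t)) 0) $ i) differentiable (at 0)"
      unfolding sa_dist_def by (simp add: dpol)
    show "\<forall>t. det (transpose (PsiMat \<gamma> P (pol (l k t)))) \<noteq> 0"
      using mdp.det_Psi[OF loc] by (simp add: det_transpose)
    show "\<forall>t. transpose (PsiMat \<gamma> P (pol (l k t))) *v dvis \<gamma> \<mu>0 P (pol (l k t))
        = (1-\<gamma>) *\<^sub>R sa_dist \<mu>0 P (pol (l k t)) 0"
      using mdp.dvis_eq[OF loc] by simp
  qed
  have de: "(\<lambda>t. e (l k t) $ i) differentiable (at 0)" for k i
  proof -
    have "e x $ i = r $ i - (\<Sum>j\<in>UNIV. ((if i = j then 1 else 0) - \<gamma> * (P $ i $ fst j * pol x $ j)) * q $ j)" for x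
      unfolding e_def tderr_def by (simp add: matrix_vector_mult_def Psi_entry)
    moreover have "(\<lambda>t. r $ i - (\<Sum>j\<in>UNIV. ((if i = j then 1 else 0) - \<gamma> * (P $ i $ fst j * pol (l k t) $ j)) * q $ j)) differentiable (at 0)"
      by (intro differentiable_diff differentiable_const differentiable_sum ballI differentiable_mult dpol) simp
    ultimately show ?thesis by simp
  qed
  have dJ: "(\<lambda>t. Jpi \<gamma> \<mu>0 (pol (l k t)) q) differentiable (at 0)" for k
  proof -
    have "Jpi \<gamma> \<mu>0 (pol x) q = (1 - \<gamma>) * (\<Sum>j\<in>UNIV. (\<mu>0 $ fst j * pol x $ j) * q $ j)" for x
      unfolding mdp.Jpi_eq[OF loc] by (simp add: inner_vec_def sa_dist_def)
    moreover have "(\<lambda>t. (1 - \<gamma>) * (\<Sum>j\<in>UNIV. (\<mu>0 $ fst j * pol (l k t) $ j) * q $ j)) differentiable (at 0)"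
      by (intro differentiable_const differentiable_sum ballI differentiable_mult dpol) simp
    ultimately show ?thesis by simp
  qed
  have ddi: "(\<lambda>t. d (l k t) $ i * e (l k t) $ i) differentiable (at 0)" for k i
    by (intro differentiable_mult dd de)
  have dprod: "(\<lambda>t. \<Sum>i\<in>UNIV. d (l k t) $ i * e (l k t) $ i) differentiable (at 0)" for k
    by (intro differentiable_sum ballI ddi) simp
  have G: "grad (\<lambda>x. d x \<bullet> e x) \<theta> $ k = deriv (\<lambda>t. \<Sum>i\<in>UNIV. d (l k t) $ i * e (l k t) $ i) 0" for k
    by (simp add: grad_def pderiv_k_def l_def inner_vec_def)
  have GJ: "grad (\<lambda>x. Jpi \<gamma> \<mu>0 (pol x) q) \<theta> $ k = deriv (\<lambda>t. Jpi \<gamma> \<mu>0 (pol (l k t)) q) 0" for k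
    by (simp add: grad_def pderiv_k_def l_def)
  have ones: "matrix_inv (diagm (d \<theta>)) *v d \<theta> = 1"
    unfolding d_def using mdp.dvis_pos[OF loc, of \<theta>] by (intro diagm_inv_ones) (metis less_irrefl)
  define F where "F x = - (diagm (d x) *v e x)" for x
  have gs: "g_semi \<gamma> \<mu>0 P r pol \<theta> q = grad (\<lambda>x. Jpi \<gamma> \<mu>0 (pol x) q) \<theta> - transpose (jacobian F \<theta>) *v 1"
    unfolding g_semi_def Let_def F_def using ones unfolding d_def e_def by simp
  have Jac: "jacobian F \<theta> $ i $ k = deriv (\<lambda>t. - (d (l k t) $ i * e (l k t) $ i)) 0" for i k
    by (simp add: jacobian_def pderiv_k_def F_def l_def diagm_mv)
  have first: "g_semi \<gamma> \<mu>0 P r pol \<theta> q = grad (\<lambda>x. Jpi \<gamma> \<mu>0 (pol x) q) \<theta> + grad (\<lambda>x. d x \<bullet> e x) \<theta>"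
  proof -
    have "(transpose (jacobian F \<theta>) *v 1) $ k = - grad (\<lambda>x. d x \<bullet> e x) \<theta> $ k" for k
    proof -
      have "(transpose (jacobian F \<theta>) *v 1) $ k = (\<Sum>i\<in>UNIV. deriv (\<lambda>t. - (d (l k t) $ i * e (l k t) $ i)) 0)"
        unfolding transpose_mv Jac by simp
      also have "\<dots> = (\<Sum>i\<in>UNIV. - deriv (\<lambda>t. d (l k t) $ i * e (l k t) $ i) 0)"
        by (intro sum.cong refl deriv_minus' ddi)
      also have "\<dots> = - deriv (\<lambda>t. \<Sum>i\<in>UNIV. d (l k t) $ i * e (l k t) $ i) 0"
        by (subst deriv_sum') (use ddi in \<open>auto simp: sum_negf\<close>)
      finally show ?thesis unfolding G .
    qed
    then show ?thesis unfolding gs by (simp add: vec_eq_iff)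
  qed
  have second: "grad (\<lambda>x. Jpi \<gamma> \<mu>0 (pol x) (qfun \<gamma> P r (pol x))) \<theta>
      = grad (\<lambda>x. Jpi \<gamma> \<mu>0 (pol x) q) \<theta> + grad (\<lambda>x. d x \<bullet> e x) \<theta>"
  proof -
    have eqf: "(\<lambda>x. Jpi \<gamma> \<mu>0 (pol x) (qfun \<gamma> P r (pol x))) = (\<lambda>x. Jpi \<gamma> \<mu>0 (pol x) q + d x \<bullet> e x)"
      unfolding d_def e_def using mdp.J_identity[OF loc] by blast
    have "grad (\<lambda>x. Jpi \<gamma> \<mu>0 (pol x) q + d x \<bullet> e x) \<theta> $ k
        = deriv (\<lambda>t. Jpi \<gamma> \<mu>0 (pol (l k t)) q + (\<Sum>i\<in>UNIV. d (l k t) $ i * e (l k t) $ i)) 0" for k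
      by (simp add: grad_def pderiv_k_def l_def inner_vec_def)
    also have "\<dots> k = deriv (\<lambda>t. Jpi \<gamma> \<mu>0 (pol (l k t)) q) 0 + deriv (\<lambda>t. \<Sum>i\<in>UNIV. d (l k t) $ i * e (l k t) $ i) 0" for k
      by (rule deriv_add'[OF dJ dprod])
    finally show ?thesis unfolding eqf by (simp add: vec_eq_iff G GJ)
  qed
  show ?thesis using first second unfolding d_def e_def by simp
qed

end
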